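(* Let $G\in T_{n,m}$ be a two-terminal graph such that the edge $st$ is not in $G$, let $e$ be any edge of $G$, and let $d$ be any positive integer. Then the two-terminal graph $G-e+st$ is $d$-stronger than $G$.
   Context: All graphs are finite, simple and undirected. A two-terminal graph is a graph $G$ together with two distinguished vertices $s,t$ (the terminals). $T_{n,m}$ denotes the set of all pairwise nonisomorphic (with isomorphisms preserving the set of terminals) two-terminal graphs with $n$ vertices and $m$ edges. For a positive integer $d$, a $d$-pathset of a two-terminal graph $G$ is a spanning subgraph of $G$ containing a path of length (number of edges) at most $d$ joining $s$ and $t$; $N_i^d(G)$ is the number of $d$-pathsets of $G$ with exactly $i$ edges. For $G,H\in T_{n,m}$, $G$ is $d$-stronger than $H$ if $N_i^d(G)\geq N_i^d(H)$ for every $i\in\{1,\ldots,m\}$ and $N_j^d(G)>N_j^d(H)$ for some $j\in\{1,\ldots,m\}$. $G-e+st$ denotes the graph obtained from $G$ by deleting edge $e$ and adding the edge $st$. *)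

theory Defs
  imports Main
begin

definition simple_graph :: "'a set \<Rightarrow> 'a set set \<Rightarrow> bool" where
  "simple_graph V E \<longleftrightarrow> finite V \<and> (\<forall>e\<in>E. \<exists>u v. e = {u, v} \<and> u \<in> V \<and> v \<in> V \<and> u \<noteq> v)"

definition two_terminal_graph :: "'a set \<Rightarrow> 'a set set \<Rightarrow> 'a \<Rightarrow> 'a \<Rightarrow> bool" where
  "two_terminal_graph V E s t \<longleftrightarrow> simple_graph V E \<and> s \<in> V \<and> t \<in> V \<and> s \<noteq> t"

definition is_path :: "'a set set \<Rightarrow> 'a list \<Rightarrow> bool" where
  "is_path F p \<longleftrightarrow> p \<noteq> [] \<and> distinct p \<and> (\<forall>i. Suc i < length p \<longrightarrow> {p ! i, p ! Suc i} \<in> F)"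

text \<open>F (a spanning subgraph, given by its edge set) contains an s-t path of length at most d.\<close>
definition has_short_st_path :: "'a set set \<Rightarrow> 'a \<Rightarrow> 'a \<Rightarrow> nat \<Rightarrow> bool" where
  "has_short_st_path F s t d \<longleftrightarrow>
     (\<exists>p. is_path F p \<and> hd p = s \<and> last p = t \<and> length p - 1 \<le> d)"

definition N :: "nat \<Rightarrow> nat \<Rightarrow> 'a set set \<Rightarrow> 'a \<Rightarrow> 'a \<Rightarrow> nat" where
  "N d i E s t = card {F. F \<subseteq> E \<and> card F = i \<and> has_short_st_path F s t d}"

definition d_stronger :: "nat \<Rightarrow> 'a set set \<Rightarrow> 'a set set \<Rightarrow> 'a \<Rightarrow> 'a \<Rightarrow> bool" where
  "d_stronger d E' E s t \<longleftrightarrow>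
     (\<forall>i\<in>{1..card E}. N d i E' s t \<ge> N d i E s t) \<and>
     (\<exists>j\<in>{1..card E}. N d j E' s t > N d j E s t)"

end

theory Submission
  imports Defs
begin

lemma single_edge_path:
  assumes "has_short_st_path {f} s t d" "s \<noteq> t"
  shows "f = {s, t}"
proof -
  obtain p where p: "is_path {f} p" "hd p = s" "last p = t"
    using assms(1) unfolding has_short_st_path_def by blast
  have ne: "p \<noteq> []" and dist: "distinct p" and ed: "\<And>i. Suc i < length p \<Longrightarrow> {p ! i, p ! Suc i} = f"
    using p(1) unfolding is_path_def by auto
  have "length p \<noteq> 1"
  proof
    assume "length p = 1"
    then have "hd p = last p" using ne by (cases p) auto
    then show False using p assms(2) by simp
  qed
  moreover have "length p > 0" using ne by simp
  ultimately have len: "length p \<ge> 2" by linarith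
  have h0: "p ! 0 = s" using p(2) ne by (simp add: hd_conv_nth)
  have f0: "f = {s, p ! 1}" using ed[of 0] len h0 by simp
  show ?thesis
  proof (cases "length p = 2")
    case True
    then have "p ! 1 = t" using p(3) ne by (simp add: last_conv_nth)
    then show ?thesis using f0 by simp
  next
    case False
    then have "length p \<ge> 3" using len by simp
    then have "{p ! 1, p ! 2} = f" using ed[of 1] by (simp add: numeral_2_eq_2)
    then have "p ! 2 = s \<or> p ! 2 = p ! 1" using f0 by (auto simp: doubleton_eq_iff)
    moreover have l: "2 < length p" "0 < length p" "1 < length p" using \<open>length p \<ge> 3\<close> by auto
    moreover have "p ! 2 \<noteq> p ! 0" "p ! 2 \<noteq> p ! 1"
      using nth_eq_iff_index_eq[OF dist l(1) l(2)] nth_eq_iff_index_eq[OF dist l(1) l(3)] by auto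
    ultimately show ?thesis using h0 by simp
  qed
qed

theorem lemma5:
  fixes V :: "'a set" and E :: "'a set set" and s t :: 'a and e :: "'a set" and d :: nat
  assumes "two_terminal_graph V E s t"
    and "{s, t} \<notin> E"
    and "e \<in> E"
    and "d \<ge> 1"
  shows "two_terminal_graph V (E - {e} \<union> {{s, t}}) s t
         \<and> card (E - {e} \<union> {{s, t}}) = card E
         \<and> d_stronger d (E - {e} \<union> {{s, t}}) E s t"
proof -
  define E' where "E' = E - {e} \<union> {{s, t}}"
  have V: "finite V" "s \<in> V" "t \<in> V" "s \<noteq> t"
    and Ed: "\<forall>e\<in>E. \<exists>u v. e = {u, v} \<and> u \<in> V \<and> v \<in> V \<and> u \<noteq> v"
    using assms(1) unfolding two_terminal_graph_def simple_graph_def by auto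
  have EP: "E \<subseteq> Pow V"
  proof
    fix x assume "x \<in> E"
    then obtain u v where "x = {u,v}" "u \<in> V" "v \<in> V" using Ed by blast
    then show "x \<in> Pow V" by auto
  qed
  have finE: "finite E" by (rule finite_subset[OF EP]) (simp add: V(1))
  have finE': "finite E'" using finE unfolding E'_def by simp
  have E'eq: "E' = insert {s,t} (E - {e})" unfolding E'_def by auto
  have G1: "two_terminal_graph V E' s t"
    unfolding two_terminal_graph_def simple_graph_def
  proof (intro conjI ballI)
    fix x assume "x \<in> E'"
    then have "x = {s,t} \<or> x \<in> E" unfolding E'eq by blast
    then show "\<exists>u v. x = {u, v} \<and> u \<in> V \<and> v \<in> V \<and> u \<noteq> v"
    proof
      assume "x = {s,t}" then show ?thesis using V by blast
    next
      assume "x \<in> E" then show ?thesis using Ed by blast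
    qed
  qed (use V in auto)
  have cE0: "card E > 0" using finE assms(3) card_gt_0_iff by blast
  have cardE': "card E' = card E"
    unfolding E'eq using finE assms(2,3) cE0 by (simp add: card_Diff_singleton)
  define S where "S = (\<lambda>E i. {F. F \<subseteq> E \<and> card F = i \<and> has_short_st_path F s t d})"
  define \<phi> where "\<phi> = (\<lambda>F. if e \<in> F then F - {e} \<union> {{s, t}} else F)"
  have sp: "has_short_st_path F s t d" if "{s,t} \<in> F" for F
    unfolding has_short_st_path_def
    apply (rule exI[of _ "[s, t]"])
    using that V(4) assms(4) by (auto simp: is_path_def less_Suc_eq)
  have ge: "N d i E s t \<le> N d i E' s t" for i
  proof -
    have "card (S E i) \<le> card (S E' i)"
    proof (rule card_inj_on_le[of \<phi>])
      show "inj_on \<phi> (S E i)"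
      proof (rule inj_onI)
        fix F G assume F: "F \<in> S E i" and G: "G \<in> S E i" and eq: "\<phi> F = \<phi> G"
        have nF: "{s,t} \<notin> F" and nG: "{s,t} \<notin> G" using F G assms(2) unfolding S_def by auto
        have phT: "\<phi> X = insert {s,t} (X - {e})" if "e \<in> X" for X
          using that unfolding \<phi>_def by auto
        have phF: "\<phi> X = X" if "e \<notin> X" for X
          using that unfolding \<phi>_def by auto
        show "F = G"
        proof (cases "e \<in> F")
          case eF: True
          show ?thesis
          proof (cases "e \<in> G")
            case eG: True
            have "F - {e} = \<phi> F - {{s,t}}" unfolding phT[OF eF] using nF by blast
            moreover have "G - {e} = \<phi> G - {{s,t}}" unfolding phT[OF eG] using nG by blast
            ultimately have "F - {e} = G - {e}" using eq by simp
            then show ?thesis using eF eG by (metis insert_Diff)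
          next
            case False
            have "{s,t} \<in> \<phi> F" unfolding phT[OF eF] by blast
            then have "{s,t} \<in> G" using eq phF[OF False] by simp
            then show ?thesis using nG by blast
          qed
        next
          case nF': False
          show ?thesis
          proof (cases "e \<in> G")
            case True
            have "{s,t} \<in> \<phi> G" unfolding phT[OF True] by blast
            then have "{s,t} \<in> F" using eq phF[OF nF'] by simp
            then show ?thesis using nF by blast
          next
            case False
            then show ?thesis using eq phF[OF nF'] phF[OF False] by simp
          qed
        qed
      qed
      show "\<phi> ` S E i \<subseteq> S E' i"
      proof
        fix X assume "X \<in> \<phi> ` S E i"
        then obtain F where F: "F \<subseteq> E" "card F = i" "has_short_st_path F s t d" and X: "X = \<phi> F"
          unfolding S_def by auto
        have finF: "finite F" using F(1) finE finite_subset by blast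
        have nst: "{s,t} \<notin> F" using F(1) assms(2) by auto
        show "X \<in> S E' i"
        proof (cases "e \<in> F")
          case True
          have "X = insert {s,t} (F - {e})" unfolding X \<phi>_def using True by auto
          moreover have "card F > 0" using finF True card_gt_0_iff by blast
          ultimately have "card X = card F" using True finF nst by (simp add: card_Diff_singleton)
          moreover have "X \<subseteq> E'" unfolding X \<phi>_def E'_def using True F(1) by auto
          moreover have "has_short_st_path X s t d" using sp unfolding X \<phi>_def using True by simp
          ultimately show ?thesis using F unfolding S_def by simp
        next
          case False
          have "X = F" unfolding X \<phi>_def using False by simp
          moreover have "F \<subseteq> E'" using F(1) False unfolding E'_def by blast
          ultimately show ?thesis using F unfolding S_def by simp
        qed
      qed
      have "S E' i \<subseteq> Pow E'" unfolding S_def by blast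
      then show "finite (S E' i)" using finE' by (simp add: finite_subset)
    qed
    moreover have "N d i E s t = card (S E i)" "N d i E' s t = card (S E' i)"
      unfolding N_def S_def by (rule refl)+
    ultimately show ?thesis by simp
  qed
  have N1: "N d 1 E s t = 0"
  proof -
    have "{F. F \<subseteq> E \<and> card F = 1 \<and> has_short_st_path F s t d} = {}"
    proof (rule ccontr)
      assume "{F. F \<subseteq> E \<and> card F = 1 \<and> has_short_st_path F s t d} \<noteq> {}"
      then obtain F where F: "F \<subseteq> E" "card F = 1" "has_short_st_path F s t d" by blast
      then obtain f where "F = {f}" by (meson card_1_singletonE)
      then show False using single_edge_path[of "f" s t d] F V(4) assms(2) by auto
    qed
    then show ?thesis unfolding N_def by (simp only: card.empty)
  qed
  have N1': "N d 1 E' s t > 0"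
  proof -
    have st: "{s,t} \<in> E'" unfolding E'eq by blast
    have "{{s,t}} \<in> {F. F \<subseteq> E' \<and> card F = 1 \<and> has_short_st_path F s t d}"
    proof (intro CollectI conjI)
      show "{{s,t}} \<subseteq> E'" using st by blast
      show "card {{s,t}} = 1" by (rule is_singleton_altdef[THEN iffD1], rule is_singletonI)
      show "has_short_st_path {{s,t}} s t d" by (rule sp) blast
    qed
    moreover have "{F. F \<subseteq> E' \<and> card F = 1 \<and> has_short_st_path F s t d} \<subseteq> Pow E'" by blast
    then have "finite {F. F \<subseteq> E' \<and> card F = 1 \<and> has_short_st_path F s t d}"
      using finE' by (simp add: finite_subset)
    ultimately have "card {F. F \<subseteq> E' \<and> card F = 1 \<and> has_short_st_path F s t d} > 0"
      by (intro card_gt_0_iff[THEN iffD2] conjI) blast+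
    then show ?thesis unfolding N_def .
  qed
  have c1: "(1::nat) \<in> {1..card E}" using cE0 by simp
  have "d_stronger d E' E s t" unfolding d_stronger_def
  proof (intro conjI ballI)
    show "\<exists>j\<in>{1..card E}. N d j E s t < N d j E' s t"
    proof (rule bexI[of _ 1])
      show "N d 1 E s t < N d 1 E' s t" using N1 N1' by simp
    qed (rule c1)
  qed (rule ge)
  with G1 cardE' show ?thesis unfolding E'_def by (intro conjI)
qed

end
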